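(* Let $\mathcal A$ be a GRA over $(\mathbb N;=)$ and $\mathcal B$ a one-register GURA over $(\mathbb N;=)$ over the same alphabet. Let $S=(\ell^{\mathcal A}(\mathbf d),C)$ be a synchronized configuration such that $C$ is essentially coverable, and let $a\ne b$ with $a,b\in\mathrm{supp}(C)$ and $a\equiv_S b$. Then $S$ reaches a bad synchronized configuration in $(\mathcal S,\Rightarrow)$ if and only if $S'=(\ell^{\mathcal A}(\mathbf d),(C\setminus C_b^+)\cup C_b^-)$ reaches a bad synchronized configuration in $(\mathcal S,\Rightarrow)$.
   Context: A GRA over $(\mathbb N;=)$ and finite alphabet $\Sigma$ is $(\mathcal R,\mathcal L,\ell_{init},\mathcal L_{acc},E)$ with finite registers $\mathcal R$, locations, initial location, accepting locations, and finite edges $(\ell,\sigma,\phi,\ell')$ where $\phi$ is a Boolean combination of equalities $t_1=t_2$, $t_i\in\{\#\}\cup\{r,\dot r:r\in\mathcal R\}$, interpreted on $(\mathbf u,d,\mathbf v)$ (current valuation in $\mathbb N_\bot^{\mathcal R}$ with $\mathbb N_\bot=\mathbb N\cup\{\bot\}$, input datum, next valuation); next register values not fixed by $\phi$ may be guessed subject to $\phi$. States are $\ell(\mathbf u)$; the initial state has all registers $\bot$; $\ell(\mathbf u)\xrightarrow{\sigma,d}\ell'(\mathbf u')$ if some edge $(\ell,\sigma,\phi,\ell')$ has $(\mathbf u,d,\mathbf u')\models\phi$. A GURA is a GRA in which each data word has at most one run from the initial state ending in an accepting location. For $\mathcal B$ (one register): a configuration is a (possibly infinite) set of states $\ell(u)$,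 $u\in\mathbb N_\bot$; $\mathrm{succ}(C,(\sigma,d))$ is the set of states reached by one $(\sigma,d)$-transition from states of $C$, extended to words; $C$ is accepting if it contains a state with accepting location; reachable if $C=\mathrm{succ}(\{\ell_{init}(\bot)\},w)$ for some data word $w$; coverable if contained in a reachable configuration; essentially coverable if every subset of at most two of its states is coverable. $\mathrm{supp}(C)$ is the set of $d\in\mathbb N$ such that either $\ell(d)\in C$ for some $\ell$ with $\{e:\ell(e)\in C\}$ finite, or $\ell(d)\notin C$ for some $\ell$ with $\{e:\ell(e)\in C\}$ cofinite. $C_d^+=\{\ell(d):\ell(d)\in C,\ \{e\in\mathbb N:\ell(e)\in C\}\text{ finite}\}$, $C_d^-=\{\ell(d):\ell(d)\notin C,\ \{e\in\mathbb N:\ell(e)\in C\}\text{ infinite}\}$. A synchronized configuration is a pair $(\ell(\mathbf d),C)$ of a state of $\mathcal A$ and a configuration of $\mathcal B$; $\mathcal S$ is their set; $(\ell(\mathbf d),C)\Rightarrow(\ell'(\mathbf d'),C')$ iff for some $(\sigma,d)$, $\ell(\mathbf d)\xrightarrow{\sigma,d}_{\mathcal A}\ell'(\mathbf d')$ and $\mathrm{succ}_{\mathcal B}(C,(\sigma,d))=C'$; "reaches" means via a finite $\Rightarrow$-path. $(\ell(\mathbf d),C)$ is bad if $\ell\in\mathcal L^{\mathcal A}_{acc}$ and $C$ is non-accepting. For $S=(\ell(\mathbf d),C)$ and $a,b\in\mathrm{supp}(C)$, $a\equiv_S b$ (indistinguishable) means $a,b$ do not occur in $\mathbf d$ and $\{\ell:\ell(a)\in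 C\}=\{\ell:\ell(b)\in C\}$. *)

theory Defs
  imports Main
begin

text \<open>Register values are in N_bot, modelled as nat option (None = bot).
  Registers are given by a finite type 'r; locations by an explicit finite set;
  the finite alphabet is a finite type 'a.\<close>

datatype 'r gterm = Hash | Cur 'r | Nxt 'r

datatype 'r guard =
    GTrue
  | GEq "'r gterm" "'r gterm"
  | GNot "'r guard"
  | GAnd "'r guard" "'r guard"
  | GOr "'r guard" "'r guard"

fun eval_term :: "('r \<Rightarrow> nat option) \<Rightarrow> nat \<Rightarrow> ('r \<Rightarrow> nat option) \<Rightarrow> 'r gterm \<Rightarrow> nat option" where
  "eval_term u d v Hash = Some d"
| "eval_term u d v (Cur r) = u r"
| "eval_term u d v (Nxt r) = v r"

fun sat :: "('r \<Rightarrow> nat option) \<Rightarrow> nat \<Rightarrow> ('r \<Rightarrow> nat option) \<Rightarrow> 'r guard \<Rightarrow> bool" where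
  "sat u d v GTrue = True"
| "sat u d v (GEq t1 t2) = (eval_term u d v t1 = eval_term u d v t2)"
| "sat u d v (GNot f) = (\<not> sat u d v f)"
| "sat u d v (GAnd f g) = (sat u d v f \<and> sat u d v g)"
| "sat u d v (GOr f g) = (sat u d v f \<or> sat u d v g)"

record ('r, 'l, 'a) gra =
  locs :: "'l set"
  init :: 'l
  acc :: "'l set"
  edges :: "('l \<times> 'a \<times> 'r guard \<times> 'l) set"

definition wf_gra :: "('r::finite, 'l, 'a::finite) gra \<Rightarrow> bool" where
  "wf_gra A \<longleftrightarrow> finite (locs A) \<and> init A \<in> locs A \<and> acc A \<subseteq> locs A
     \<and> finite (edges A) \<and> (\<forall>(l, \<sigma>, \<phi>, l') \<in> edges A. l \<in> locs A \<and> l' \<in> locs A)"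

type_synonym ('l, 'r) state = "'l \<times> ('r \<Rightarrow> nat option)"

definition step :: "('r, 'l, 'a) gra \<Rightarrow> ('l, 'r) state \<Rightarrow> 'a \<times> nat \<Rightarrow> ('l, 'r) state \<Rightarrow> bool" where
  "step A s x s' \<longleftrightarrow> (\<exists>\<phi>. (fst s, fst x, \<phi>, fst s') \<in> edges A \<and> sat (snd s) (snd x) (snd s') \<phi>)"

definition init_state :: "('r, 'l, 'a) gra \<Rightarrow> ('l, 'r) state" where
  "init_state A = (init A, (\<lambda>_. None))"

definition is_run :: "('r, 'l, 'a) gra \<Rightarrow> ('a \<times> nat) list \<Rightarrow> ('l, 'r) state list \<Rightarrow> bool" where
  "is_run A w ss \<longleftrightarrow> length ss = Suc (length w) \<and> ss ! 0 = init_state A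
     \<and> (\<forall>i < length w. step A (ss ! i) (w ! i) (ss ! Suc i))"

definition gura :: "('r::finite, 'l, 'a::finite) gra \<Rightarrow> bool" where
  "gura A \<longleftrightarrow> wf_gra A \<and>
     (\<forall>w ss ss'. is_run A w ss \<and> fst (last ss) \<in> acc A \<and> is_run A w ss' \<and> fst (last ss') \<in> acc A
        \<longrightarrow> ss = ss')"

text \<open>A state l(u) of B with u in N_bot is the pair (l, u).\<close>
type_synonym 'l config = "('l \<times> nat option) set"

definition succ1 :: "(unit, 'l, 'a) gra \<Rightarrow> 'l config \<Rightarrow> 'a \<times> nat \<Rightarrow> 'l config" where
  "succ1 B C x = {(l', v'). \<exists>(l, v) \<in> C. step B (l, \<lambda>_. v) x (l', \<lambda>_. v')}"

definition succ_word :: "(unit, 'l, 'a) gra \<Rightarrow> 'l config \<Rightarrow> ('a \<times> nat) list \<Rightarrow> 'l config" where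
  "succ_word B C w = foldl (succ1 B) C w"

definition accepting_config :: "(unit, 'l, 'a) gra \<Rightarrow> 'l config \<Rightarrow> bool" where
  "accepting_config B C \<longleftrightarrow> (\<exists>(l, v) \<in> C. l \<in> acc B)"

definition reachable_config :: "(unit, 'l, 'a) gra \<Rightarrow> 'l config \<Rightarrow> bool" where
  "reachable_config B C \<longleftrightarrow> (\<exists>w. C = succ_word B {(init B, None)} w)"

definition coverable :: "(unit, 'l, 'a) gra \<Rightarrow> 'l config \<Rightarrow> bool" where
  "coverable B C \<longleftrightarrow> (\<exists>D. reachable_config B D \<and> C \<subseteq> D)"

definition ess_coverable :: "(unit, 'l, 'a) gra \<Rightarrow> 'l config \<Rightarrow> bool" where
  "ess_coverable B C \<longleftrightarrow> (\<forall>X \<subseteq> C. finite X \<and> card X \<le> 2 \<longrightarrow> coverable B X)"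

definition supp :: "(unit, 'l, 'a) gra \<Rightarrow> 'l config \<Rightarrow> nat set" where
  "supp B C = {d. (\<exists>l \<in> locs B. (l, Some d) \<in> C \<and> finite {e. (l, Some e) \<in> C})
                \<or> (\<exists>l \<in> locs B. (l, Some d) \<notin> C \<and> finite (- {e. (l, Some e) \<in> C}))}"

definition Cplus :: "(unit, 'l, 'a) gra \<Rightarrow> 'l config \<Rightarrow> nat \<Rightarrow> 'l config" where
  "Cplus B C d = {(l, Some d) | l. l \<in> locs B \<and> (l, Some d) \<in> C \<and> finite {e. (l, Some e) \<in> C}}"

definition Cminus :: "(unit, 'l, 'a) gra \<Rightarrow> 'l config \<Rightarrow> nat \<Rightarrow> 'l config" where
  "Cminus B C d = {(l, Some d) | l. l \<in> locs B \<and> (l, Some d) \<notin> C \<and> infinite {e. (l, Some e) \<in> C}}"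

type_synonym ('l1, 'r, 'l2) sync = "('l1, 'r) state \<times> 'l2 config"

definition is_sync :: "('r, 'l1, 'a) gra \<Rightarrow> (unit, 'l2, 'a) gra \<Rightarrow> ('l1, 'r, 'l2) sync \<Rightarrow> bool" where
  "is_sync A B S \<longleftrightarrow> fst (fst S) \<in> locs A \<and> (\<forall>(l, v) \<in> snd S. l \<in> locs B)"

definition sync_step :: "('r, 'l1, 'a) gra \<Rightarrow> (unit, 'l2, 'a) gra
    \<Rightarrow> ('l1, 'r, 'l2) sync \<Rightarrow> ('l1, 'r, 'l2) sync \<Rightarrow> bool" where
  "sync_step A B S S' \<longleftrightarrow> is_sync A B S \<and> is_sync A B S' \<and>
     (\<exists>\<sigma> d. step A (fst S) (\<sigma>, d) (fst S') \<and> snd S' = succ1 B (snd S) (\<sigma>, d))"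

definition bad :: "('r, 'l1, 'a) gra \<Rightarrow> (unit, 'l2, 'a) gra \<Rightarrow> ('l1, 'r, 'l2) sync \<Rightarrow> bool" where
  "bad A B S \<longleftrightarrow> fst (fst S) \<in> acc A \<and> \<not> accepting_config B (snd S)"

definition reaches_bad :: "('r, 'l1, 'a) gra \<Rightarrow> (unit, 'l2, 'a) gra \<Rightarrow> ('l1, 'r, 'l2) sync \<Rightarrow> bool" where
  "reaches_bad A B S \<longleftrightarrow> (\<exists>S'. (sync_step A B)\<^sup>*\<^sup>* S S' \<and> bad A B S')"

definition indist :: "(unit, 'l2, 'a) gra \<Rightarrow> ('l1, 'r, 'l2) sync \<Rightarrow> nat \<Rightarrow> nat \<Rightarrow> bool" where
  "indist B S a b \<longleftrightarrow> a \<in> supp B (snd S) \<and> b \<in> supp B (snd S)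
     \<and> Some a \<notin> range (snd (fst S)) \<and> Some b \<notin> range (snd (fst S))
     \<and> {l. (l, Some a) \<in> snd S} = {l. (l, Some b) \<in> snd S}"

end

theory Submission
  imports Defs
begin


definition sw :: "nat \<Rightarrow> nat \<Rightarrow> nat \<Rightarrow> nat" where
  "sw x y z = (if z = x then y else if z = y then x else z)"

lemma sw_inv[simp]: "sw x y (sw x y z) = z" by (simp add: sw_def)
lemma sw_x[simp]: "sw x y x = y" by (simp add: sw_def)
lemma sw_y[simp]: "sw x y y = x" by (simp add: sw_def)
lemma sw_other: "z \<noteq> x \<Longrightarrow> z \<noteq> y \<Longrightarrow> sw x y z = z" by (simp add: sw_def)
lemma inj_sw: "inj (sw x y)" by (metis injI sw_inv)

definition pw :: "(nat \<Rightarrow> nat) \<Rightarrow> ('a \<times> nat) list \<Rightarrow> ('a \<times> nat) list" where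
  "pw \<pi> w = map (\<lambda>(\<sigma>, d). (\<sigma>, \<pi> d)) w"

definition dat :: "('a \<times> nat) list \<Rightarrow> nat set" where "dat w = snd ` set w"

lemma finite_dat: "finite (dat w)" by (simp add: dat_def)

lemma pw_id: "(\<And>z. z \<in> dat w \<Longrightarrow> \<pi> z = z) \<Longrightarrow> pw \<pi> w = w"
  unfolding pw_def dat_def by (induction w) auto

lemma pw_pw: "(\<And>z. \<pi> (\<pi> z) = z) \<Longrightarrow> pw \<pi> (pw \<pi> w) = w"
  unfolding pw_def by (induction w) auto

lemma dat_pw: "dat (pw \<pi> w) = \<pi> ` dat w"
  unfolding pw_def dat_def by (induction w) auto

definition pv :: "(nat \<Rightarrow> nat) \<Rightarrow> ('r \<Rightarrow> nat option) \<Rightarrow> ('r \<Rightarrow> nat option)" where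
  "pv \<pi> u = map_option \<pi> \<circ> u"

lemma eval_term_perm: "eval_term (pv \<pi> u) (\<pi> d) (pv \<pi> v) t = map_option \<pi> (eval_term u d v t)"
  by (cases t) (simp_all add: pv_def)

lemma sat_perm: "inj \<pi> \<Longrightarrow> sat (pv \<pi> u) (\<pi> d) (pv \<pi> v) \<phi> = sat u d v \<phi>"
  by (induction \<phi>) (simp_all add: eval_term_perm option.inj_map inj_eq)

lemma step_perm: "inj \<pi> \<Longrightarrow> step A (l, u) (\<sigma>, d) (l', v) \<Longrightarrow> step A (l, pv \<pi> u) (\<sigma>, \<pi> d) (l', pv \<pi> v)"
  unfolding step_def by (auto simp: sat_perm)

definition ps :: "(nat \<Rightarrow> nat) \<Rightarrow> 'l \<times> nat option \<Rightarrow> 'l \<times> nat option" where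
  "ps \<pi> s = (fst s, map_option \<pi> (snd s))"

lemma succ1_mem: "(l', v') \<in> succ1 B C (\<sigma>, d) \<longleftrightarrow> (\<exists>(l, v) \<in> C. step B (l, \<lambda>_. v) (\<sigma>, d) (l', \<lambda>_. v'))"
  unfolding succ1_def by auto

lemma succ1_perm: "inj \<pi> \<Longrightarrow> t \<in> succ1 B C x \<Longrightarrow> ps \<pi> t \<in> succ1 B (ps \<pi> ` C) (fst x, \<pi> (snd x))"
proof -
  assume inj: "inj \<pi>" and t: "t \<in> succ1 B C x"
  obtain l' v' where tt: "t = (l', v')" by (cases t)
  obtain \<sigma> d where xx: "x = (\<sigma>, d)" by (cases x)
  from t obtain l v where lv: "(l, v) \<in> C" "step B (l, \<lambda>_. v) (\<sigma>, d) (l', \<lambda>_. v')"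
    unfolding tt xx succ1_mem by auto
  have "step B (l, pv \<pi> (\<lambda>_. v)) (\<sigma>, \<pi> d) (l', pv \<pi> (\<lambda>_. v'))"
    using step_perm[OF inj lv(2)] .
  then have "step B (l, \<lambda>_. map_option \<pi> v) (\<sigma>, \<pi> d) (l', \<lambda>_. map_option \<pi> v')"
    by (simp add: pv_def o_def)
  moreover have "(l, map_option \<pi> v) \<in> ps \<pi> ` C" using lv(1) by (intro image_eqI[of _ _ "(l,v)"]) (simp_all add: ps_def)
  ultimately have "(l', map_option \<pi> v') \<in> succ1 B (ps \<pi> ` C) (\<sigma>, \<pi> d)"
    unfolding succ1_mem by blast
  then show ?thesis by (simp add: tt xx ps_def)
qed

lemma succ1_mono: "C \<subseteq> D \<Longrightarrow> succ1 B C x \<subseteq> succ1 B D x"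
  unfolding succ1_def by auto

lemma succ_word_Cons[simp]: "succ_word B C (x # w) = succ_word B (succ1 B C x) w"
  by (simp add: succ_word_def)
lemma succ_word_Nil[simp]: "succ_word B C [] = C"
  by (simp add: succ_word_def)
lemma succ_word_snoc: "succ_word B C (w @ [x]) = succ1 B (succ_word B C w) x"
  by (simp add: succ_word_def)

lemma succ_word_mono: "C \<subseteq> D \<Longrightarrow> succ_word B C w \<subseteq> succ_word B D w"
proof (induction w arbitrary: C D)
  case Nil then show ?case by simp
next
  case (Cons x w) then show ?case by (simp add: succ1_mono)
qed

lemma succ_word_perm: "inj \<pi> \<Longrightarrow> t \<in> succ_word B C w \<Longrightarrow> ps \<pi> t \<in> succ_word B (ps \<pi> ` C) (pw \<pi> w)"
proof (induction w arbitrary: C)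
  case Nil then show ?case by (simp add: pw_def)
next
  case (Cons x w)
  have "ps \<pi> t \<in> succ_word B (ps \<pi> ` succ1 B C x) (pw \<pi> w)" using Cons by simp
  moreover have "ps \<pi> ` succ1 B C x \<subseteq> succ1 B (ps \<pi> ` C) (fst x, \<pi> (snd x))"
    using succ1_perm[OF Cons.prems(1)] by blast
  ultimately have "ps \<pi> t \<in> succ_word B (succ1 B (ps \<pi> ` C) (fst x, \<pi> (snd x))) (pw \<pi> w)"
    using succ_word_mono by blast
  then show ?case by (cases x) (simp add: pw_def)
qed

definition cov :: "(unit, 'l, 'a) gra \<Rightarrow> 'l \<times> nat option \<Rightarrow> ('a \<times> nat) list \<Rightarrow> bool" where
  "cov B s w \<longleftrightarrow> accepting_config B (succ_word B {s} w)"

lemma cov_perm: "inj \<pi> \<Longrightarrow> cov B s w \<Longrightarrow> cov B (ps \<pi> s) (pw \<pi> w)"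
proof -
  assume inj: "inj \<pi>" and c: "cov B s w"
  then obtain l v where "(l, v) \<in> succ_word B {s} w" "l \<in> acc B"
    unfolding cov_def accepting_config_def by auto
  then have "ps \<pi> (l, v) \<in> succ_word B {ps \<pi> s} (pw \<pi> w)" using succ_word_perm[OF inj, of "(l,v)" B "{s}" w] by simp
  then have "(l, map_option \<pi> v) \<in> succ_word B {ps \<pi> s} (pw \<pi> w)" by (simp add: ps_def)
  then show ?thesis unfolding cov_def accepting_config_def using \<open>l \<in> acc B\<close> by blast
qed

lemma cov_generic: "x \<notin> dat w \<Longrightarrow> y \<notin> dat w \<Longrightarrow> cov B (l, Some x) w \<Longrightarrow> cov B (l, Some y) w"
proof -
  assume x: "x \<notin> dat w" and y: "y \<notin> dat w" and c: "cov B (l, Some x) w"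
  have "pw (sw x y) w = w" using x y by (intro pw_id) (auto simp: sw_def)
  with cov_perm[OF inj_sw[of x y] c] show ?thesis by (simp add: ps_def)
qed

lemma succ_word_union: "succ_word B C w = (\<Union>s\<in>C. succ_word B {s} w)"
proof (induction w arbitrary: C)
  case Nil then show ?case by auto
next
  case (Cons x w)
  have e: "succ1 B C x = (\<Union>s\<in>C. succ1 B {s} x)" unfolding succ1_def by auto
  have "succ_word B C (x#w) = (\<Union>s'\<in>succ1 B C x. succ_word B {s'} w)" using Cons.IH[of "succ1 B C x"] by simp
  also have "\<dots> = (\<Union>s\<in>C. \<Union>s'\<in>succ1 B {s} x. succ_word B {s'} w)" unfolding e by blast
  also have "\<dots> = (\<Union>s\<in>C. succ_word B (succ1 B {s} x) w)"
  proof -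
    have "\<And>s. succ_word B (succ1 B {s} x) w = (\<Union>s'\<in>succ1 B {s} x. succ_word B {s'} w)" by (rule Cons.IH)
    then show ?thesis by simp
  qed
  finally show ?case by simp
qed

lemma acc_cov: "accepting_config B (succ_word B C w) \<longleftrightarrow> (\<exists>s\<in>C. cov B s w)"
  unfolding cov_def accepting_config_def by (subst succ_word_union) blast



definition runfrom :: "('r, 'l, 'a) gra \<Rightarrow> ('l, 'r) state \<Rightarrow> ('a \<times> nat) list \<Rightarrow> ('l, 'r) state list \<Rightarrow> bool" where
  "runfrom A q w ss \<longleftrightarrow> length ss = Suc (length w) \<and> ss ! 0 = q
     \<and> (\<forall>i < length w. step A (ss ! i) (w ! i) (ss ! Suc i))"

definition tost :: "'l \<times> nat option \<Rightarrow> ('l, unit) state" where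
  "tost s = (fst s, \<lambda>_. snd s)"

lemma tost_inj: "tost s = tost t \<Longrightarrow> s = t"
  unfolding tost_def by (metis prod.collapse prod.inject)

lemma runfrom_Cons: "step A q x q' \<Longrightarrow> runfrom A q' w ss \<Longrightarrow> runfrom A q (x # w) (q # ss)"
  unfolding runfrom_def by (auto simp: less_Suc_eq_0_disj)

lemma succ_word_run: "t \<in> succ_word B C w \<Longrightarrow> \<exists>s\<in>C. \<exists>ss. runfrom B (tost s) w ss \<and> last ss = tost t"
proof (induction w arbitrary: C)
  case Nil
  then show ?case by (intro bexI[of _ t] exI[of _ "[tost t]"]) (auto simp: runfrom_def)
next
  case (Cons x w)
  have "\<exists>s'\<in>succ1 B C x. \<exists>ss. runfrom B (tost s') w ss \<and> last ss = tost t"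
    using Cons.IH Cons.prems by simp
  then obtain s' ss where s': "s' \<in> succ1 B C x" "runfrom B (tost s') w ss" "last ss = tost t" by blast
  obtain l' v' where e': "s' = (l', v')" by (cases s')
  obtain \<sigma> d where ex: "x = (\<sigma>, d)" by (cases x)
  from s'(1) obtain l v where lv: "(l, v) \<in> C" "step B (l, \<lambda>_. v) (\<sigma>, d) (l', \<lambda>_. v')"
    unfolding e' ex succ1_mem by auto
  have "runfrom B (tost (l, v)) (x # w) (tost (l, v) # ss)"
    by (rule runfrom_Cons[OF _ s'(2)]) (use lv(2) in \<open>simp add: tost_def e' ex\<close>)
  moreover have "ss \<noteq> []" using s'(2) unfolding runfrom_def by auto
  ultimately show ?case using lv(1) s'(3) by (intro bexI[of _ "(l,v)"] exI[of _ "tost (l, v) # ss"]) auto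
qed

lemma append_nth_tl: "length ss1 = Suc n \<Longrightarrow> ss2 \<noteq> [] \<Longrightarrow> ss2 ! 0 = last ss1 \<Longrightarrow> j < length ss2 \<Longrightarrow>
   (ss1 @ tl ss2) ! (n + j) = ss2 ! j"
proof (cases j)
  case 0
  assume "length ss1 = Suc n" "ss2 \<noteq> []" "ss2 ! 0 = last ss1"
  moreover have "ss1 \<noteq> []" using \<open>length ss1 = Suc n\<close> by auto
  ultimately show ?thesis using 0 by (simp add: nth_append last_conv_nth)
next
  case (Suc k)
  assume "length ss1 = Suc n" "j < length ss2"
  then show ?thesis using Suc by (simp add: nth_append nth_tl)
qed

lemma runfrom_append:
  assumes r1: "runfrom A q u ss1" and r2: "runfrom A (last ss1) w ss2"
  shows "runfrom A q (u @ w) (ss1 @ tl ss2)" "(ss1 @ tl ss2) ! length u = last ss1"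
    "last (ss1 @ tl ss2) = last ss2"
proof -
  have l1: "length ss1 = Suc (length u)" and l2: "length ss2 = Suc (length w)"
    and h1: "ss1 ! 0 = q" and h2: "ss2 ! 0 = last ss1"
    using r1 r2 unfolding runfrom_def by auto
  have ne: "ss2 \<noteq> []" using l2 by auto
  have sh: "\<And>j. j < length ss2 \<Longrightarrow> (ss1 @ tl ss2) ! (length u + j) = ss2 ! j"
    using append_nth_tl[OF l1 ne h2] by simp
  show "(ss1 @ tl ss2) ! length u = last ss1" using sh[of 0] h2 ne by simp
  show "last (ss1 @ tl ss2) = last ss2"
  proof (cases "tl ss2 = []")
    case True
    then have "ss2 = [ss2 ! 0]" using ne by (metis hd_conv_nth list.collapse)
    then have "last ss2 = last ss1" using h2 by (metis last.simps)
    then show ?thesis using True by simp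
  next
    case False
    then show ?thesis using ne by (simp add: last_tl)
  qed
  show "runfrom A q (u @ w) (ss1 @ tl ss2)"
    unfolding runfrom_def
  proof (intro conjI allI impI)
    show "length (ss1 @ tl ss2) = Suc (length (u @ w))" using l1 l2 by simp
    show "(ss1 @ tl ss2) ! 0 = q" using l1 h1 by (simp add: nth_append)
    fix i assume i: "i < length (u @ w)"
    show "step A ((ss1 @ tl ss2) ! i) ((u @ w) ! i) ((ss1 @ tl ss2) ! Suc i)"
    proof (cases "i < length u")
      case True
      then have "(ss1 @ tl ss2) ! i = ss1 ! i" "(ss1 @ tl ss2) ! Suc i = ss1 ! Suc i" "(u @ w) ! i = u ! i"
        using l1 by (auto simp: nth_append)
      then show ?thesis using r1 True unfolding runfrom_def by auto
    next
      case False
      then obtain j where j: "i = length u + j" "j < length w" using i by (metis add_diff_inverse_nat length_append nat_add_left_cancel_less)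
      have "(ss1 @ tl ss2) ! i = ss2 ! j" "(ss1 @ tl ss2) ! Suc i = ss2 ! Suc j" "(u @ w) ! i = w ! j"
        using sh[of j] sh[of "Suc j"] j l2 by (auto simp: nth_append)
      then show ?thesis using r2 j unfolding runfrom_def by auto
    qed
  qed
qed

lemma disjoint:
  assumes g: "gura B" and ec: "ess_coverable B C" and s: "s \<in> C" and t: "t \<in> C" and st: "s \<noteq> t"
    and cs: "cov B s w" and ct: "cov B t w"
  shows False
proof -
  have "coverable B {s, t}" using ec s t st unfolding ess_coverable_def by (simp add: card_insert_if)
  then obtain u where D: "{s, t} \<subseteq> succ_word B {(init B, None)} u"
    unfolding coverable_def reachable_config_def by auto
  have key: "\<exists>ss. is_run B (u @ w) ss \<and> fst (last ss) \<in> acc B \<and> ss ! length u = tost x"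
    if x: "x \<in> succ_word B {(init B, None)} u" and cx: "cov B x w" for x
  proof -
    obtain ss1 where r1: "runfrom B (init_state B) u ss1" "last ss1 = tost x"
      using succ_word_run[OF x] by (auto simp: tost_def init_state_def)
    obtain y where y: "y \<in> succ_word B {x} w" "fst y \<in> acc B"
      using cx unfolding cov_def accepting_config_def by auto
    obtain ss2 where r2: "runfrom B (tost x) w ss2" "last ss2 = tost y"
      using succ_word_run[OF y(1)] by auto
    have r2': "runfrom B (last ss1) w ss2" using r2 r1 by simp
    note ap = runfrom_append[OF r1(1) r2']
    show ?thesis
      by (intro exI[of _ "ss1 @ tl ss2"]) (use ap r1 r2 y in \<open>auto simp: is_run_def runfrom_def tost_def\<close>)
  qed
  obtain ss where ss: "is_run B (u @ w) ss" "fst (last ss) \<in> acc B" "ss ! length u = tost s"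
    using key[OF _ cs] D by auto
  obtain ss' where ss': "is_run B (u @ w) ss'" "fst (last ss') \<in> acc B" "ss' ! length u = tost t"
    using key[OF _ ct] D by auto
  have "ss = ss'" using g ss ss' unfolding gura_def by blast
  then have "tost s = tost t" using ss(3) ss'(3) by simp
  then show False using st tost_inj by blast
qed



fun apath :: "('r, 'l, 'a) gra \<Rightarrow> ('l, 'r) state \<Rightarrow> ('a \<times> nat) list \<Rightarrow> ('l, 'r) state \<Rightarrow> bool" where
  "apath A q [] q' = (q' = q)"
| "apath A q (x # w) q' = (\<exists>q''. step A q x q'' \<and> apath A q'' w q')"

lemma apath_snoc: "apath A q w q1 \<Longrightarrow> step A q1 x q' \<Longrightarrow> apath A q (w @ [x]) q'"
proof (induction w arbitrary: q)
  case Nil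
  then have "step A q x q' \<and> apath A q' [] q'" by simp
  then show ?case by (simp only: append.simps apath.simps) blast
next
  case (Cons y w)
  then obtain q2 where "step A q y q2" "apath A q2 w q1" by auto
  then have "step A q y q2 \<and> apath A q2 (w @ [x]) q'" using Cons by blast
  then show ?case by (simp only: append.simps apath.simps) blast
qed

definition pq :: "(nat \<Rightarrow> nat) \<Rightarrow> ('l, 'r) state \<Rightarrow> ('l, 'r) state" where
  "pq \<pi> q = (fst q, pv \<pi> (snd q))"

lemma apath_perm: "inj \<pi> \<Longrightarrow> apath A q w q' \<Longrightarrow> apath A (pq \<pi> q) (pw \<pi> w) (pq \<pi> q')"
proof (induction w arbitrary: q)
  case Nil then show ?case by (simp add: pw_def)
next
  case (Cons x w)
  then obtain q'' where "step A q x q''" "apath A q'' w q'" by auto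
  moreover obtain l u where "q = (l, u)" by (cases q)
  moreover obtain l2 u2 where "q'' = (l2, u2)" by (cases q'')
  moreover obtain \<sigma> d where "x = (\<sigma>, d)" by (cases x)
  ultimately have "step A (pq \<pi> q) (\<sigma>, \<pi> d) (pq \<pi> q'') \<and> apath A (pq \<pi> q'') (pw \<pi> w) (pq \<pi> q')"
    using Cons step_perm[OF Cons.prems(1), of A l u \<sigma> d l2 u2] by (auto simp: pq_def)
  then have "\<exists>q3. step A (pq \<pi> q) (\<sigma>, \<pi> d) q3 \<and> apath A q3 (pw \<pi> w) (pq \<pi> q')" by blast
  then show ?case using \<open>x = (\<sigma>, d)\<close> by (simp add: pw_def)
qed

definition Aw :: "('r, 'l, 'a) gra \<Rightarrow> ('l, 'r) state \<Rightarrow> ('a \<times> nat) list \<Rightarrow> bool" where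
  "Aw A q w \<longleftrightarrow> (\<exists>q'. apath A q w q' \<and> fst q' \<in> acc A)"

lemma Aw_perm: "inj \<pi> \<Longrightarrow> (\<And>x. Some x \<in> range dd \<Longrightarrow> \<pi> x = x) \<Longrightarrow> Aw A (l, dd) w \<Longrightarrow> Aw A (l, dd) (pw \<pi> w)"
proof -
  assume inj: "inj \<pi>" and fx: "\<And>x. Some x \<in> range dd \<Longrightarrow> \<pi> x = x" and aw: "Aw A (l, dd) w"
  have "pv \<pi> dd = dd"
  proof
    fix r show "pv \<pi> dd r = dd r" by (cases "dd r") (simp_all add: pv_def, metis fx rangeI)
  qed
  then have "pq \<pi> (l, dd) = (l, dd)" by (simp add: pq_def)
  then show ?thesis using aw apath_perm[OF inj] unfolding Aw_def by (metis fst_conv pq_def)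
qed

lemma rt_path: "(sync_step A B)\<^sup>*\<^sup>* S S' \<Longrightarrow> \<exists>w. apath A (fst S) w (fst S') \<and> snd S' = succ_word B (snd S) w"
proof (induction rule: rtranclp_induct)
  case base then show ?case by (intro exI[of _ "[]"]) simp
next
  case (step S1 S2)
  then obtain w where w: "apath A (fst S) w (fst S1)" "snd S1 = succ_word B (snd S) w" by auto
  from step(2) obtain \<sigma> d where sd: "step A (fst S1) (\<sigma>, d) (fst S2)" "snd S2 = succ1 B (snd S1) (\<sigma>, d)"
    unfolding sync_step_def by auto
  show ?case using apath_snoc[OF w(1) sd(1)] w(2) sd(2) by (intro exI[of _ "w @ [(\<sigma>, d)]"]) (simp add: succ_word_snoc)
qed

lemma path_rt:
  assumes wa: "wf_gra A" and wb: "wf_gra B"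
  shows "is_sync A B (q, C) \<Longrightarrow> apath A q w q' \<Longrightarrow> (sync_step A B)\<^sup>*\<^sup>* (q, C) (q', succ_word B C w)"
proof (induction w arbitrary: q C)
  case Nil then show ?case by simp
next
  case (Cons x w)
  obtain \<sigma> d where x: "x = (\<sigma>, d)" by (cases x)
  from Cons.prems(2) obtain q1 where q1: "step A q x q1" "apath A q1 w q'" by auto
  have s1: "is_sync A B (q1, succ1 B C x)"
  proof -
    from q1(1) obtain \<phi> where "(fst q, fst x, \<phi>, fst q1) \<in> edges A" unfolding step_def by auto
    then have "fst q1 \<in> locs A" using wa unfolding wf_gra_def by fastforce
    moreover have "\<forall>(l, v) \<in> succ1 B C x. l \<in> locs B"
    proof (clarify)
      fix l v assume "(l, v) \<in> succ1 B C x"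
      then obtain l0 v0 where "step B (l0, \<lambda>_. v0) x (l, \<lambda>_. v)" unfolding succ1_def by auto
      then obtain \<phi> where "(l0, fst x, \<phi>, l) \<in> edges B" unfolding step_def by auto
      then show "l \<in> locs B" using wb unfolding wf_gra_def by fastforce
    qed
    ultimately show ?thesis unfolding is_sync_def by simp
  qed
  have "sync_step A B (q, C) (q1, succ1 B C x)"
    unfolding sync_step_def using Cons.prems(1) s1 q1(1) x by auto
  moreover have "(sync_step A B)\<^sup>*\<^sup>* (q1, succ1 B C x) (q', succ_word B (succ1 B C x) w)"
    using Cons.IH[OF s1 q1(2)] .
  ultimately show ?case by (simp add: converse_rtranclp_into_rtranclp)
qed

lemma RB:
  assumes wa: "wf_gra A" and wb: "wf_gra B" and sy: "is_sync A B (q, C)"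
  shows "reaches_bad A B (q, C) \<longleftrightarrow> (\<exists>w. Aw A q w \<and> (\<forall>s\<in>C. \<not> cov B s w))"
proof
  assume "reaches_bad A B (q, C)"
  then obtain S' where S': "(sync_step A B)\<^sup>*\<^sup>* (q, C) S'" "bad A B S'" unfolding reaches_bad_def by auto
  from rt_path[OF S'(1)] obtain w where "apath A q w (fst S')" "snd S' = succ_word B C w" by auto
  then show "\<exists>w. Aw A q w \<and> (\<forall>s\<in>C. \<not> cov B s w)"
    using S'(2) unfolding bad_def Aw_def by (metis acc_cov fst_conv snd_conv)
next
  assume "\<exists>w. Aw A q w \<and> (\<forall>s\<in>C. \<not> cov B s w)"
  then obtain w q' where w: "apath A q w q'" "fst q' \<in> acc A" "\<forall>s\<in>C. \<not> cov B s w"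
    unfolding Aw_def by auto
  have "(sync_step A B)\<^sup>*\<^sup>* (q, C) (q', succ_word B C w)" using path_rt[OF wa wb sy w(1)] .
  moreover have "bad A B (q', succ_word B C w)" using w(2,3) unfolding bad_def by (simp add: acc_cov)
  ultimately show "reaches_bad A B (q, C)" unfolding reaches_bad_def by blast
qed



lemma fresh: "finite (F :: nat set) \<Longrightarrow> \<exists>c. c \<notin> F"
  using ex_new_if_finite infinite_UNIV_nat by blast

lemma fresh_in: "infinite (V :: nat set) \<Longrightarrow> finite F \<Longrightarrow> \<exists>y\<in>V. y \<notin> F"
  using Diff_infinite_finite by (metis Diff_iff finite.emptyI infinite_imp_nonempty ex_in_conv)

lemma ps_None[simp]: "ps \<pi> (l, None) = (l, None)" by (simp add: ps_def)
lemma ps_Some[simp]: "ps \<pi> (l, Some x) = (l, Some (\<pi> x))" by (simp add: ps_def)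

lemma sw_fix: "x \<notin> F \<Longrightarrow> y \<notin> F \<Longrightarrow> z \<in> F \<Longrightarrow> sw x y z = z"
  by (auto simp: sw_def)

lemma good:
  fixes P :: "('a::finite \<times> nat) list \<Rightarrow> bool" and B :: "(unit, 'l, 'a) gra"
  assumes Pcl: "\<And>\<pi> w. inj \<pi> \<Longrightarrow> (\<And>x. x \<in> D0 \<Longrightarrow> \<pi> x = x) \<Longrightarrow> P w \<Longrightarrow> P (pw \<pi> w)"
    and bD: "b \<notin> D0"
    and C'1: "\<And>l v. v \<noteq> Some b \<Longrightarrow> (l, v) \<in> C' \<longleftrightarrow> (l, v) \<in> C"
    and C'2: "\<And>l. (l, Some b) \<in> C' \<Longrightarrow> infinite {e. (l, Some e) \<in> C}"
    and Pu: "P u" and NC: "\<forall>s\<in>C. \<not> cov B s u"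
    and c: "c \<notin> dat u" "c \<notin> D0" "c \<noteq> b"
    and nt: "\<not> (\<exists>l. (l, Some c) \<in> C \<and> cov B (l, Some b) u)"
  shows "\<exists>w. P w \<and> (\<forall>s\<in>C'. \<not> cov B s w)"
proof (intro exI[of _ "pw (sw b c) u"] conjI ballI notI)
  show "P (pw (sw b c) u)" using bD c by (intro Pcl[OF inj_sw _ Pu]) (auto simp: sw_def)
  fix s assume s: "s \<in> C'" and cs: "cov B s (pw (sw b c) u)"
  have cs': "cov B (ps (sw b c) s) u" using cov_perm[OF inj_sw[of b c] cs] by (simp add: pw_pw)
  obtain l v where sv: "s = (l, v)" by (cases s)
  show False
  proof (cases v)
    case None then show ?thesis using s cs' NC C'1 sv by auto
  next
    case (Some x)
    consider "x = b" | "x = c" | "x \<noteq> b" "x \<noteq> c" by blast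
    then show ?thesis
    proof cases
      case 1
      then have inf: "infinite {e. (l, Some e) \<in> C}" using C'2 s sv Some by simp
      obtain y where y: "(l, Some y) \<in> C" "y \<notin> dat u" using fresh_in[OF inf finite_dat[of u]] by auto
      have "cov B (l, Some c) u" using cs' sv Some 1 by simp
      then have "cov B (l, Some y) u" using cov_generic c(1) y(2) by metis
      then show ?thesis using NC y(1) by auto
    next
      case 2
      have "(l, Some c) \<in> C" using s sv Some 2 C'1 c(3) by auto
      moreover have "cov B (l, Some b) u" using cs' sv Some 2 by simp
      ultimately show ?thesis using nt by auto
    next
      case 3
      then have "s \<in> C" using s sv Some C'1 by auto
      moreover have "ps (sw b c) s = s" using 3 sv Some by (simp add: sw_def)
      ultimately show ?thesis using NC cs' by auto
    qed
  qed
qed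

lemma fwd:
  fixes P :: "('a::finite \<times> nat) list \<Rightarrow> bool" and B :: "(unit, 'l, 'a) gra"
  assumes g: "gura B" and ec: "ess_coverable B C"
    and Pcl: "\<And>\<pi> w. inj \<pi> \<Longrightarrow> (\<And>x. x \<in> D0 \<Longrightarrow> \<pi> x = x) \<Longrightarrow> P w \<Longrightarrow> P (pw \<pi> w)"
    and fD: "finite D0" and aD: "a \<notin> D0" and bD: "b \<notin> D0" and ab: "a \<noteq> b"
    and ind: "\<And>l. (l, Some a) \<in> C \<longleftrightarrow> (l, Some b) \<in> C"
    and C'1: "\<And>l v. v \<noteq> Some b \<Longrightarrow> (l, v) \<in> C' \<longleftrightarrow> (l, v) \<in> C"
    and C'2: "\<And>l. (l, Some b) \<in> C' \<Longrightarrow> infinite {e. (l, Some e) \<in> C}"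
    and Pw: "P w" and NC: "\<forall>s\<in>C. \<not> cov B s w"
  shows "\<exists>w. P w \<and> (\<forall>s\<in>C'. \<not> cov B s w)"
proof -
  have fin: "finite (dat w \<union> D0 \<union> {a, b})" using fD finite_dat by simp
  obtain c where c: "c \<notin> dat w \<union> D0 \<union> {a, b}" using fresh[OF fin] by blast
  obtain c' where c': "c' \<notin> dat w \<union> D0 \<union> {a, b, c}" using fresh[of "dat w \<union> D0 \<union> {a, b, c}"] fin by auto
  show ?thesis
  proof (cases "\<exists>l. (l, Some c) \<in> C \<and> cov B (l, Some b) w")
    case False
    show ?thesis by (rule good[OF Pcl bD C'1 C'2 Pw NC]) (use c False in auto)
  next
    case True
    then obtain l1 where l1: "(l1, Some c) \<in> C" "cov B (l1, Some b) w" by blast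
    define u2 where "u2 = pw (sw a b) w"
    have Pu2: "P u2" unfolding u2_def using aD bD by (intro Pcl[OF inj_sw _ Pw]) (auto simp: sw_def)
    have ps_ab: "ps (sw a b) s \<in> C" if "s \<in> C" for s
    proof -
      obtain l v where sv: "s = (l, v)" by (cases s)
      show ?thesis
      proof (cases v)
        case None then show ?thesis using that sv by simp
      next
        case (Some x)
        have sC: "(l, Some x) \<in> C" using that sv Some by simp
        consider "x = a" | "x = b" | "x \<noteq> a" "x \<noteq> b" by blast
        then show ?thesis
        proof cases
          case 1 then show ?thesis using sC ind[of l] sv Some by simp
        next
          case 2 then show ?thesis using sC ind[of l] sv Some by simp
        next
          case 3 then show ?thesis using sC sv Some by (simp add: sw_other)
        qed
      qed
    qed
    have NC2: "\<forall>s\<in>C. \<not> cov B s u2"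
    proof (intro ballI notI)
      fix s assume "s \<in> C" "cov B s u2"
      then have "cov B (ps (sw a b) s) w" using cov_perm[OF inj_sw[of a b], of B s u2] unfolding u2_def by (simp add: pw_pw)
      then show False using NC ps_ab \<open>s \<in> C\<close> by blast
    qed
    have c'u2: "c' \<notin> dat u2"
    proof
      assume "c' \<in> dat u2"
      then obtain z where z: "z \<in> dat w" "c' = sw a b z" unfolding u2_def dat_pw by auto
      then have "z = c'" using c' by (metis insertCI sw_inv sw_other UnI2)
      then show False using z c' by auto
    qed
    show ?thesis
    proof (cases "\<exists>l. (l, Some c') \<in> C \<and> cov B (l, Some b) u2")
      case False
      show ?thesis by (rule good[OF Pcl bD C'1 C'2 Pu2 NC2]) (use c' c'u2 False in auto)
    next
      case True
      then obtain l2 where l2: "(l2, Some c') \<in> C" "cov B (l2, Some b) u2" by blast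
      have l2a: "cov B (l2, Some a) w" using cov_perm[OF inj_sw[of a b] l2(2)] unfolding u2_def by (simp add: pw_pw)
      define \<rho> where "\<rho> = sw b c \<circ> sw a c'"
      have inj\<rho>: "inj \<rho>" unfolding \<rho>_def by (simp add: inj_sw inj_compose)
      have \<rho>b: "\<rho> b = c" using ab c' unfolding \<rho>_def by (simp add: sw_def)
      have \<rho>a: "\<rho> a = c'" using ab c c' unfolding \<rho>_def by (auto simp: sw_def)
      have "cov B (l1, Some c) (pw \<rho> w)" using cov_perm[OF inj\<rho> l1(2)] \<rho>b by simp
      moreover have "cov B (l2, Some c') (pw \<rho> w)" using cov_perm[OF inj\<rho> l2a] \<rho>a by simp
      moreover have "(l1, Some c) \<noteq> (l2, Some c')" using c' by auto
      ultimately show ?thesis using disjoint[OF g ec l1(1) l2(1)] by blast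
    qed
  qed
qed

lemma bwd:
  fixes P :: "('a::finite \<times> nat) list \<Rightarrow> bool" and B :: "(unit, 'l, 'a) gra"
  assumes g: "gura B" and ec: "ess_coverable B C"
    and Pcl: "\<And>\<pi> w. inj \<pi> \<Longrightarrow> (\<And>x. x \<in> D0 \<Longrightarrow> \<pi> x = x) \<Longrightarrow> P w \<Longrightarrow> P (pw \<pi> w)"
    and fD: "finite D0" and aD: "a \<notin> D0" and bD: "b \<notin> D0" and ab: "a \<noteq> b"
    and ind: "\<And>l. (l, Some a) \<in> C \<longleftrightarrow> (l, Some b) \<in> C"
    and locC: "\<And>l v. (l, v) \<in> C \<Longrightarrow> l \<in> locs B"
    and fL: "finite (locs B)"
    and C'1: "\<And>l v. v \<noteq> Some b \<Longrightarrow> (l, v) \<in> C' \<longleftrightarrow> (l, v) \<in> C"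
    and C'3: "\<And>l. l \<in> locs B \<Longrightarrow> infinite {e. (l, Some e) \<in> C} \<Longrightarrow> (l, Some b) \<in> C'"
    and Pw: "P w" and NC: "\<forall>s\<in>C'. \<not> cov B s w"
  shows "\<exists>w. P w \<and> (\<forall>s\<in>C. \<not> cov B s w)"
proof -
  define F where "F = (\<Union>l\<in>{l \<in> locs B. finite {e. (l, Some e) \<in> C}}. {e. (l, Some e) \<in> C})"
  have fF: "finite F" unfolding F_def using fL by auto
  have fin: "finite (dat w \<union> D0 \<union> {a, b} \<union> F)" using fD finite_dat fF by simp
  obtain c where c: "c \<notin> dat w \<union> D0 \<union> {a, b} \<union> F" using fresh[OF fin] by blast
  show ?thesis
  proof (intro exI[of _ "pw (sw b c) w"] conjI ballI notI)
    show "P (pw (sw b c) w)" using bD c by (intro Pcl[OF inj_sw _ Pw]) (auto simp: sw_def)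
    fix s assume s: "s \<in> C" and cs: "cov B s (pw (sw b c) w)"
    have cs': "cov B (ps (sw b c) s) w" using cov_perm[OF inj_sw[of b c] cs] by (simp add: pw_pw)
    obtain l v where sv: "s = (l, v)" by (cases s)
    show False
    proof (cases v)
      case None then show ?thesis using s cs' NC C'1 sv by auto
    next
      case (Some x)
      consider "x = b" | "x = c" | "x \<noteq> b" "x \<noteq> c" by blast
      then show ?thesis
      proof cases
        case 1
        have cc: "cov B (l, Some c) w" using cs' sv Some 1 by simp
        show ?thesis
        proof (cases "finite {e. (l, Some e) \<in> C}")
          case False
          obtain y where y: "(l, Some y) \<in> C" "y \<notin> dat w \<union> {b}"
            using fresh_in[OF False, of "dat w \<union> {b}"] finite_dat[of w] by auto
          have "cov B (l, Some y) w" using cov_generic[OF _ _ cc] c y(2) by auto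
          moreover have "(l, Some y) \<in> C'" using C'1 y by auto
          ultimately show ?thesis using NC by auto
        next
          case True
          have la: "(l, Some a) \<in> C" and lb: "(l, Some b) \<in> C" using s sv Some 1 ind by auto
          have fin2: "finite (dat w \<union> {a, b})" using finite_dat by simp
          obtain y where y: "y \<notin> dat w \<union> {a, b}" using fresh[OF fin2] by blast
          obtain y' where y': "y' \<notin> dat w \<union> {a, b, y}" using fresh[of "dat w \<union> {a, b, y}"] finite_dat by auto
          have cy: "cov B (l, Some y) w" using cov_generic[OF _ _ cc] c y by auto
          have cy': "cov B (l, Some y') w" using cov_generic[OF _ _ cc] c y' by auto
          define \<rho> where "\<rho> = sw a y \<circ> sw b y'"
          have inj\<rho>: "inj \<rho>" unfolding \<rho>_def by (simp add: inj_sw inj_compose)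
          have \<rho>y: "\<rho> y = a" using y y' unfolding \<rho>_def by (auto simp: sw_def)
          have \<rho>y': "\<rho> y' = b" using ab y y' unfolding \<rho>_def by (auto simp: sw_def)
          have "cov B (l, Some a) (pw \<rho> w)" using cov_perm[OF inj\<rho> cy] \<rho>y by simp
          moreover have "cov B (l, Some b) (pw \<rho> w)" using cov_perm[OF inj\<rho> cy'] \<rho>y' by simp
          ultimately show ?thesis using disjoint[OF g ec la lb] ab by auto
        qed
      next
        case 2
        have lB: "l \<in> locs B" using locC s sv by blast
        have "c \<in> {e. (l, Some e) \<in> C}" using s sv Some 2 by simp
        then have "infinite {e. (l, Some e) \<in> C}" using c lB unfolding F_def by blast
        then have "(l, Some b) \<in> C'" using C'3 lB by blast
        moreover have "cov B (l, Some b) w" using cs' sv Some 2 by simp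
        ultimately show ?thesis using NC by auto
      next
        case 3
        then have "s \<in> C'" using s sv Some C'1 by auto
        moreover have "ps (sw b c) s = s" using 3 sv Some by (simp add: sw_def)
        ultimately show ?thesis using NC cs' by auto
      qed
    qed
  qed
qed



theorem proposition6:
  fixes A :: "('r::finite, 'l1, 'a::finite) gra"
    and B :: "(unit, 'l2, 'a) gra"
    and l :: 'l1 and dd :: "'r \<Rightarrow> nat option" and C :: "'l2 config"
    and a b :: nat
  assumes "wf_gra A"
    and "gura B"
    and "is_sync A B ((l, dd), C)"
    and "ess_coverable B C"
    and "a \<noteq> b"
    and "a \<in> supp B C" and "b \<in> supp B C"
    and "indist B ((l, dd), C) a b"
  shows "reaches_bad A B ((l, dd), C)
     \<longleftrightarrow> reaches_bad A B ((l, dd), (C - Cplus B C b) \<union> Cminus B C b)"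
proof -
  note wa = assms(1) and g = assms(2) and sy = assms(3) and ec = assms(4) and ab = assms(5)
    and ind0 = assms(8)
  define C' where "C' = (C - Cplus B C b) \<union> Cminus B C b"
  have wb: "wf_gra B" using g unfolding gura_def by simp
  have fL: "finite (locs B)" using wb unfolding wf_gra_def by simp
  have locC: "\<And>l v. (l, v) \<in> C \<Longrightarrow> l \<in> locs B" using sy unfolding is_sync_def by auto
  have sy': "is_sync A B ((l, dd), C')"
  proof -
    have "\<forall>(l, v)\<in>C'. l \<in> locs B"
    proof (clarify)
      fix l v assume "(l, v) \<in> C'"
      then have "(l, v) \<in> C \<or> (l, v) \<in> Cminus B C b" unfolding C'_def by blast
      then show "l \<in> locs B" using locC unfolding Cminus_def by blast
    qed
    then show ?thesis using sy unfolding is_sync_def by simp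
  qed
  define D0 where "D0 = {x. Some x \<in> range dd}"
  have fD: "finite D0"
  proof -
    have "D0 = Some -` range dd" unfolding D0_def by auto
    moreover have "finite (range dd)" by simp
    ultimately show ?thesis by (simp add: finite_vimageI)
  qed
  have aD: "a \<notin> D0" and bD: "b \<notin> D0" using ind0 unfolding indist_def D0_def by simp_all
  have ind: "\<And>l. (l, Some a) \<in> C \<longleftrightarrow> (l, Some b) \<in> C"
  proof -
    fix l
    have "{l. (l, Some a) \<in> C} = {l. (l, Some b) \<in> C}" using ind0 unfolding indist_def by simp
    then show "(l, Some a) \<in> C \<longleftrightarrow> (l, Some b) \<in> C" by (metis mem_Collect_eq)
  qed
  have Pcl: "\<And>\<pi> w. inj \<pi> \<Longrightarrow> (\<And>x. x \<in> D0 \<Longrightarrow> \<pi> x = x) \<Longrightarrow> Aw A (l, dd) w \<Longrightarrow> Aw A (l, dd) (pw \<pi> w)"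
  proof -
    fix \<pi> w assume inj: "inj \<pi>" and fx: "\<And>x. x \<in> D0 \<Longrightarrow> \<pi> x = x" and aw: "Aw A (l, dd) w"
    show "Aw A (l, dd) (pw \<pi> w)" by (rule Aw_perm[OF inj _ aw]) (use fx in \<open>simp add: D0_def\<close>)
  qed
  have C'1: "\<And>l v. v \<noteq> Some b \<Longrightarrow> (l, v) \<in> C' \<longleftrightarrow> (l, v) \<in> C"
  proof -
    fix l v assume "v \<noteq> Some b"
    then have "(l, v) \<notin> Cplus B C b" "(l, v) \<notin> Cminus B C b" unfolding Cplus_def Cminus_def by blast+
    then show "(l, v) \<in> C' \<longleftrightarrow> (l, v) \<in> C" unfolding C'_def by blast
  qed
  have C'2: "\<And>l. (l, Some b) \<in> C' \<Longrightarrow> infinite {e. (l, Some e) \<in> C}"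
  proof -
    fix l assume h: "(l, Some b) \<in> C'"
    show "infinite {e. (l, Some e) \<in> C}"
    proof
      assume f: "finite {e. (l, Some e) \<in> C}"
      then have "(l, Some b) \<notin> Cminus B C b" unfolding Cminus_def by blast
      then have "(l, Some b) \<in> C" "(l, Some b) \<notin> Cplus B C b" using h unfolding C'_def by blast+
      moreover have "l \<in> locs B" using locC calculation(1) .
      ultimately show False using f unfolding Cplus_def by blast
    qed
  qed
  have C'3: "\<And>l. l \<in> locs B \<Longrightarrow> infinite {e. (l, Some e) \<in> C} \<Longrightarrow> (l, Some b) \<in> C'"
  proof -
    fix l assume lB: "l \<in> locs B" and inf: "infinite {e. (l, Some e) \<in> C}"
    show "(l, Some b) \<in> C'"
    proof (cases "(l, Some b) \<in> C")
      case True
      have "(l, Some b) \<notin> Cplus B C b" using inf unfolding Cplus_def by blast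
      then show ?thesis using True unfolding C'_def by blast
    next
      case False
      have "(l, Some b) \<in> Cminus B C b" using False inf lB unfolding Cminus_def by blast
      then show ?thesis unfolding C'_def by blast
    qed
  qed
  have "reaches_bad A B ((l, dd), C) \<longleftrightarrow> (\<exists>w. Aw A (l, dd) w \<and> (\<forall>s\<in>C. \<not> cov B s w))"
    by (rule RB[OF wa wb sy])
  also have "\<dots> \<longleftrightarrow> (\<exists>w. Aw A (l, dd) w \<and> (\<forall>s\<in>C'. \<not> cov B s w))"
  proof
    assume "\<exists>w. Aw A (l, dd) w \<and> (\<forall>s\<in>C. \<not> cov B s w)"
    then obtain w where w: "Aw A (l, dd) w" "\<forall>s\<in>C. \<not> cov B s w" by blast
    show "\<exists>w. Aw A (l, dd) w \<and> (\<forall>s\<in>C'. \<not> cov B s w)"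
      by (rule fwd[OF g ec Pcl fD aD bD ab ind C'1 C'2 w])
  next
    assume "\<exists>w. Aw A (l, dd) w \<and> (\<forall>s\<in>C'. \<not> cov B s w)"
    then obtain w where w: "Aw A (l, dd) w" "\<forall>s\<in>C'. \<not> cov B s w" by blast
    show "\<exists>w. Aw A (l, dd) w \<and> (\<forall>s\<in>C. \<not> cov B s w)"
      by (rule bwd[OF g ec Pcl fD aD bD ab ind locC fL C'1 C'3 w])
  qed
  also have "\<dots> \<longleftrightarrow> reaches_bad A B ((l, dd), C')"
    by (rule RB[OF wa wb sy', symmetric])
  finally show ?thesis unfolding C'_def .
qed

end
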